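(* Let $G,H$ be groups, $K\le H$, $\phi\in\mathrm{Hom}(H,G)$, and let $\mathcal{T}:A^G\to A^H$ be a $\phi$-cellular automaton with memory set contained in $\phi(K)$. Then: (1) $\mathcal{T}$ is injective if and only if $\mathcal{T}_K$ is injective and $\phi$ is surjective; (2) $\mathcal{T}$ is bijective if and only if $\mathcal{T}_K$ is bijective and $\phi$ is bijective.
   Context: $A$ is a finite set with $|A|\ge 2$. For a group $G$, $A^G$ is the set of functions $G\to A$ with shift action $(g\cdot x)(k):=x(g^{-1}k)$. For $\phi\in\mathrm{Hom}(H,G)$, a $\phi$-cellular automaton is a map $\mathcal{T}:A^G\to A^H$ for which there exist finite $T\subseteq G$ (memory set) and $\mu:A^T\to A$ (local function) with $\mathcal{T}(x)(h)=\mu((\phi(h^{-1})\cdot x)|_T)$ for all $x,h$. If the memory set $T$ is contained in $\phi(K)$, the restriction $\mathcal{T}_K:A^{\phi(K)}\to A^K$ is defined by $\mathcal{T}_K(x)(k):=\mu((\phi(k^{-1})\cdot x)|_T)$ for $x\in A^{\phi(K)}$, $k\in K$; equivalently it is the unique $\phi|_K^{\phi(K)}$-cellular automaton with $\mathcal{T}(x)|_K=\mathcal{T}_K(x|_{\phi(K)})$ for all $x\in A^G$. *)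

theory Defs
  imports "HOL-Algebra.Algebra" "HOL-Library.FuncSet"
begin

definition cshift :: "('g,'c) monoid_scheme \<Rightarrow> 'g set \<Rightarrow> 'g \<Rightarrow> ('g \<Rightarrow> 'a) \<Rightarrow> ('g \<Rightarrow> 'a)" where
  "cshift G S g x = (\<lambda>k\<in>S. x (inv\<^bsub>G\<^esub> g \<otimes>\<^bsub>G\<^esub> k))"

text \<open>With S = carrier G, D = carrier H this is the phi-cellular
  automaton with memory set M and local function mu; with S = phi(K), D = K it is
  the restriction T_K.\<close>
definition phi_CA_map ::
  "('g,'c) monoid_scheme \<Rightarrow> ('h,'d) monoid_scheme \<Rightarrow> ('h \<Rightarrow> 'g) \<Rightarrow> 'g set \<Rightarrow> 'g set
    \<Rightarrow> (('g \<Rightarrow> 'a) \<Rightarrow> 'a) \<Rightarrow> 'h set \<Rightarrow> ('g \<Rightarrow> 'a) \<Rightarrow> ('h \<Rightarrow> 'a)" where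
  "phi_CA_map G H \<phi> S M \<mu> D x = (\<lambda>h\<in>D. \<mu> (restrict (cshift G S (\<phi> (inv\<^bsub>H\<^esub> h)) x) M))"

end

theory Submission
  imports Defs
begin

locale caS =
  fixes G :: "('g,'c) monoid_scheme" and H :: "('h,'d) monoid_scheme"
    and A :: "'a set" and K :: "'h set" and \<phi> :: "'h \<Rightarrow> 'g"
    and M :: "'g set" and \<mu> :: "('g \<Rightarrow> 'a) \<Rightarrow> 'a"
  assumes gG: "group G" and gH: "group H" and subK: "subgroup K H" and hom: "\<phi> \<in> hom H G"
    and A2: "card A \<ge> 2" and MK: "M \<subseteq> \<phi> ` K"
    and mu: "\<mu> \<in> (M \<rightarrow>\<^sub>E A) \<rightarrow> A"
begin

sublocale gh: group_hom H G \<phi> using gG gH hom by (simp add: group_hom_def group_hom_axioms_def)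
lemma Hassoc: "a \<in> carrier H \<Longrightarrow> b \<in> carrier H \<Longrightarrow> c \<in> carrier H \<Longrightarrow> a \<otimes>\<^bsub>H\<^esub> b \<otimes>\<^bsub>H\<^esub> c = a \<otimes>\<^bsub>H\<^esub> (b \<otimes>\<^bsub>H\<^esub> c)"
  by (rule monoid.m_assoc[OF group.is_monoid[OF gH]])
lemma Gassoc: "a \<in> carrier G \<Longrightarrow> b \<in> carrier G \<Longrightarrow> c \<in> carrier G \<Longrightarrow> a \<otimes>\<^bsub>G\<^esub> b \<otimes>\<^bsub>G\<^esub> c = a \<otimes>\<^bsub>G\<^esub> (b \<otimes>\<^bsub>G\<^esub> c)"
  by (rule monoid.m_assoc[OF group.is_monoid[OF gG]])
lemma Hinvc: "a \<in> carrier H \<Longrightarrow> inv\<^bsub>H\<^esub> a \<in> carrier H" by (rule group.inv_closed[OF gH])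
lemma Hrinv: "a \<in> carrier H \<Longrightarrow> a \<otimes>\<^bsub>H\<^esub> inv\<^bsub>H\<^esub> a = \<one>\<^bsub>H\<^esub>" by (rule group.r_inv[OF gH])
lemma Hlinv: "a \<in> carrier H \<Longrightarrow> inv\<^bsub>H\<^esub> a \<otimes>\<^bsub>H\<^esub> a = \<one>\<^bsub>H\<^esub>" by (rule group.l_inv[OF gH])
lemma Hrone: "a \<in> carrier H \<Longrightarrow> a \<otimes>\<^bsub>H\<^esub> \<one>\<^bsub>H\<^esub> = a" by (rule monoid.r_one[OF group.is_monoid[OF gH]])
lemma Hlone: "a \<in> carrier H \<Longrightarrow> \<one>\<^bsub>H\<^esub> \<otimes>\<^bsub>H\<^esub> a = a" by (rule monoid.l_one[OF group.is_monoid[OF gH]])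
lemma Grone: "a \<in> carrier G \<Longrightarrow> a \<otimes>\<^bsub>G\<^esub> \<one>\<^bsub>G\<^esub> = a" by (rule monoid.r_one[OF group.is_monoid[OF gG]])

abbreviation "CA \<equiv> phi_CA_map G H \<phi> (carrier G) M \<mu> (carrier H)"
abbreviation "TK \<equiv> phi_CA_map G H \<phi> (\<phi> ` K) M \<mu> K"

lemma Ksub: "K \<subseteq> carrier H" by (rule subgroup.subset[OF subK])
lemma Kmult: "k \<in> K \<Longrightarrow> k' \<in> K \<Longrightarrow> k \<otimes>\<^bsub>H\<^esub> k' \<in> K" by (rule subgroup.m_closed[OF subK])
lemma Kinv: "k \<in> K \<Longrightarrow> inv\<^bsub>H\<^esub> k \<in> K" by (rule subgroup.m_inv_closed[OF subK])
lemma Kone: "\<one>\<^bsub>H\<^esub> \<in> K" by (rule subgroup.one_closed[OF subK])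
lemma Gmc: "a \<in> carrier G \<Longrightarrow> b \<in> carrier G \<Longrightarrow> a \<otimes>\<^bsub>G\<^esub> b \<in> carrier G"
  by (rule monoid.m_closed[OF group.is_monoid[OF gG]])
lemma Hmc: "a \<in> carrier H \<Longrightarrow> b \<in> carrier H \<Longrightarrow> a \<otimes>\<^bsub>H\<^esub> b \<in> carrier H"
  by (rule monoid.m_closed[OF group.is_monoid[OF gH]])
lemma phic: "a \<in> carrier H \<Longrightarrow> \<phi> a \<in> carrier G" using hom by (simp add: hom_in_carrier)
lemma phim: "a \<in> carrier H \<Longrightarrow> b \<in> carrier H \<Longrightarrow> \<phi> (a \<otimes>\<^bsub>H\<^esub> b) = \<phi> a \<otimes>\<^bsub>G\<^esub> \<phi> b"
  using hom by (simp add: hom_mult)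
lemma phiK: "\<phi> ` K \<subseteq> carrier G" using Ksub by auto
lemma Mcar: "M \<subseteq> carrier G" using MK phiK by auto

lemma gen_eval:
  assumes "M \<subseteq> S" "S \<subseteq> carrier G" "D \<subseteq> carrier H" "h \<in> D"
  shows "phi_CA_map G H \<phi> S M \<mu> D x h = \<mu> (\<lambda>m\<in>M. x (\<phi> h \<otimes>\<^bsub>G\<^esub> m))"
proof -
  have hH: "h \<in> carrier H" using assms by auto
  have "\<phi> (inv\<^bsub>H\<^esub> h) = inv\<^bsub>G\<^esub> (\<phi> h)" using hH by simp
  hence e: "inv\<^bsub>G\<^esub> (\<phi> (inv\<^bsub>H\<^esub> h)) = \<phi> h" using hH by simp
  have "phi_CA_map G H \<phi> S M \<mu> D x h = \<mu> (restrict (\<lambda>k\<in>S. x (inv\<^bsub>G\<^esub> (\<phi> (inv\<^bsub>H\<^esub> h)) \<otimes>\<^bsub>G\<^esub> k)) M)"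
    unfolding phi_CA_map_def cshift_def using assms by simp
  also have "\<dots> = \<mu> (\<lambda>m\<in>M. x (\<phi> h \<otimes>\<^bsub>G\<^esub> m))"
    by (intro arg_cong[where f=\<mu>] restrict_ext) (use assms e in auto)
  finally show ?thesis .
qed

lemma CA_eval: "h \<in> carrier H \<Longrightarrow> CA x h = \<mu> (\<lambda>m\<in>M. x (\<phi> h \<otimes>\<^bsub>G\<^esub> m))"
  using gen_eval[OF Mcar] by auto

lemma TK_eval: "h \<in> K \<Longrightarrow> TK x h = \<mu> (\<lambda>m\<in>M. x (\<phi> h \<otimes>\<^bsub>G\<^esub> m))"
  using gen_eval[OF MK phiK Ksub] by auto

lemma CA_out: "h \<notin> carrier H \<Longrightarrow> CA x h = undefined"
  by (simp add: phi_CA_map_def)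
lemma TK_out: "h \<notin> K \<Longrightarrow> TK x h = undefined"
  by (simp add: phi_CA_map_def)

lemma Mform: "m \<in> M \<Longrightarrow> \<exists>k\<in>K. m = \<phi> k" using MK by auto

lemma phiKmult: "k \<in> K \<Longrightarrow> m \<in> M \<Longrightarrow> \<phi> k \<otimes>\<^bsub>G\<^esub> m \<in> \<phi> ` K"
proof -
  assume k: "k \<in> K" and m: "m \<in> M"
  then obtain k' where k': "k' \<in> K" "m = \<phi> k'" using Mform by blast
  have "\<phi> k \<otimes>\<^bsub>G\<^esub> m = \<phi> (k \<otimes>\<^bsub>H\<^esub> k')"
    using phim[of k k'] k(1) k' Ksub by (simp add: subsetD)
  thus ?thesis using Kmult k k' by auto
qed

lemma CA_funcset: "x \<in> carrier G \<rightarrow>\<^sub>E A \<Longrightarrow> CA x \<in> carrier H \<rightarrow>\<^sub>E A"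
proof -
  assume x: "x \<in> carrier G \<rightarrow>\<^sub>E A"
  have "CA x h \<in> A" if h: "h \<in> carrier H" for h
  proof -
    have "\<forall>m\<in>M. x (\<phi> h \<otimes>\<^bsub>G\<^esub> m) \<in> A"
    proof
      fix m assume "m \<in> M"
      hence "m \<in> carrier G" using Mcar by blast
      hence "\<phi> h \<otimes>\<^bsub>G\<^esub> m \<in> carrier G" using Gmc phic h by blast
      thus "x (\<phi> h \<otimes>\<^bsub>G\<^esub> m) \<in> A" by (rule PiE_mem[OF x])
    qed
    hence "(\<lambda>m\<in>M. x (\<phi> h \<otimes>\<^bsub>G\<^esub> m)) \<in> M \<rightarrow>\<^sub>E A" by (simp only: restrict_PiE_iff)
    hence "\<mu> (\<lambda>m\<in>M. x (\<phi> h \<otimes>\<^bsub>G\<^esub> m)) \<in> A" by (rule funcset_mem[OF mu])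
    thus ?thesis by (simp only: CA_eval[OF h])
  qed
  thus ?thesis by (intro PiE_I) (simp_all add: CA_out)
qed

lemma TK_funcset: "z \<in> \<phi> ` K \<rightarrow>\<^sub>E A \<Longrightarrow> TK z \<in> K \<rightarrow>\<^sub>E A"
proof -
  assume z: "z \<in> \<phi> ` K \<rightarrow>\<^sub>E A"
  have "TK z h \<in> A" if h: "h \<in> K" for h
  proof -
    have "\<forall>m\<in>M. z (\<phi> h \<otimes>\<^bsub>G\<^esub> m) \<in> A"
    proof
      fix m assume "m \<in> M"
      hence "\<phi> h \<otimes>\<^bsub>G\<^esub> m \<in> \<phi> ` K" using phiKmult h by blast
      thus "z (\<phi> h \<otimes>\<^bsub>G\<^esub> m) \<in> A" by (rule PiE_mem[OF z])
    qed
    hence "(\<lambda>m\<in>M. z (\<phi> h \<otimes>\<^bsub>G\<^esub> m)) \<in> M \<rightarrow>\<^sub>E A" by (simp only: restrict_PiE_iff)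
    hence "\<mu> (\<lambda>m\<in>M. z (\<phi> h \<otimes>\<^bsub>G\<^esub> m)) \<in> A" by (rule funcset_mem[OF mu])
    thus ?thesis by (simp only: TK_eval[OF h])
  qed
  thus ?thesis by (intro PiE_I) (simp_all add: TK_out)
qed

definition sub :: "('g \<Rightarrow> 'a) \<Rightarrow> 'h \<Rightarrow> 'g \<Rightarrow> 'a" where
  "sub x h = (\<lambda>k'\<in>\<phi> ` K. x (\<phi> h \<otimes>\<^bsub>G\<^esub> k'))"

lemma sub_funcset: "x \<in> carrier G \<rightarrow>\<^sub>E A \<Longrightarrow> h \<in> carrier H \<Longrightarrow> sub x h \<in> \<phi> ` K \<rightarrow>\<^sub>E A"
proof -
  assume x: "x \<in> carrier G \<rightarrow>\<^sub>E A" and h: "h \<in> carrier H"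
  have "x (\<phi> h \<otimes>\<^bsub>G\<^esub> k') \<in> A" if "k' \<in> \<phi> ` K" for k'
  proof -
    have "k' \<in> carrier G" using that phiK by blast
    hence "\<phi> h \<otimes>\<^bsub>G\<^esub> k' \<in> carrier G" using Gmc phic h by blast
    thus ?thesis by (rule PiE_mem[OF x])
  qed
  thus ?thesis unfolding sub_def restrict_PiE_iff by blast
qed

lemma sub_TK: assumes h: "h \<in> carrier H" and k: "k \<in> K"
  shows "TK (sub x h) k = CA x (h \<otimes>\<^bsub>H\<^esub> k)"
proof -
  have kH: "k \<in> carrier H" using k Ksub by auto
  have "(\<lambda>m\<in>M. sub x h (\<phi> k \<otimes>\<^bsub>G\<^esub> m)) = (\<lambda>m\<in>M. x (\<phi> (h \<otimes>\<^bsub>H\<^esub> k) \<otimes>\<^bsub>G\<^esub> m))"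
  proof (rule restrict_ext)
    fix m assume m: "m \<in> M"
    hence mG: "m \<in> carrier G" using Mcar by auto
    show "sub x h (\<phi> k \<otimes>\<^bsub>G\<^esub> m) = x (\<phi> (h \<otimes>\<^bsub>H\<^esub> k) \<otimes>\<^bsub>G\<^esub> m)"
      unfolding sub_def using phiKmult[OF k m] h kH mG by (simp add: Gassoc phim phic)
  qed
  thus ?thesis using TK_eval[OF k] CA_eval[of "h \<otimes>\<^bsub>H\<^esub> k"] h kH by simp
qed


lemma two: obtains a b where "a \<in> A" "b \<in> A" "a \<noteq> b"
proof -
  obtain B where B: "B \<subseteq> A" "card B = 2" "finite B" by (rule obtain_subset_with_card_n[OF A2])
  from B(2) have "\<exists>a b. B = {a,b} \<and> a \<noteq> b" by (simp only: card_2_iff)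
  then obtain a b where "B = {a,b}" "a \<noteq> b" by blast
  thus ?thesis using that B(1) by auto
qed

lemma inj_surj: assumes inj: "inj_on CA (carrier G \<rightarrow>\<^sub>E A)" shows "\<phi> ` carrier H = carrier G"
proof (rule ccontr)
  assume "\<phi> ` carrier H \<noteq> carrier G"
  moreover have "\<phi> ` carrier H \<subseteq> carrier G" using phic by auto
  ultimately obtain g where g: "g \<in> carrier G" "g \<notin> \<phi> ` carrier H" by auto
  obtain a b where ab: "a \<in> A" "b \<in> A" "a \<noteq> b" using two by blast
  define x where "x = (\<lambda>k\<in>carrier G. a)"
  define y where "y = x(g := b)"
  have xA: "x \<in> carrier G \<rightarrow>\<^sub>E A" using ab by (auto simp: x_def)
  have yA: "y \<in> carrier G \<rightarrow>\<^sub>E A" using ab xA g by (auto simp: y_def x_def)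
  have "CA x = CA y"
  proof
    fix h show "CA x h = CA y h"
    proof (cases "h \<in> carrier H")
      case True
      have "(\<lambda>m\<in>M. x (\<phi> h \<otimes>\<^bsub>G\<^esub> m)) = (\<lambda>m\<in>M. y (\<phi> h \<otimes>\<^bsub>G\<^esub> m))"
      proof (rule restrict_ext)
        fix m assume m: "m \<in> M"
        then obtain k where k: "k \<in> K" "m = \<phi> k" using Mform by blast
        have "\<phi> h \<otimes>\<^bsub>G\<^esub> m = \<phi> (h \<otimes>\<^bsub>H\<^esub> k)" using k True Ksub phim[of h k] by auto
        moreover have "h \<otimes>\<^bsub>H\<^esub> k \<in> carrier H" using k True Ksub Hmc by auto
        ultimately have "\<phi> h \<otimes>\<^bsub>G\<^esub> m \<noteq> g" using g by auto
        thus "x (\<phi> h \<otimes>\<^bsub>G\<^esub> m) = y (\<phi> h \<otimes>\<^bsub>G\<^esub> m)" by (simp add: y_def)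
      qed
      thus ?thesis using CA_eval[OF True] by simp
    qed (simp add: CA_out)
  qed
  hence "x = y" by (rule inj_onD[OF inj _ xA yA])
  moreover have "x g \<noteq> y g" using g ab by (simp add: x_def y_def)
  ultimately show False by simp
qed

lemma inj_TK: assumes inj: "inj_on CA (carrier G \<rightarrow>\<^sub>E A)" shows "inj_on TK (\<phi> ` K \<rightarrow>\<^sub>E A)"
proof (rule inj_onI)
  fix z1 z2 assume z1: "z1 \<in> \<phi> ` K \<rightarrow>\<^sub>E A" and z2: "z2 \<in> \<phi> ` K \<rightarrow>\<^sub>E A" and eq: "TK z1 = TK z2"
  obtain a where a: "a \<in> A" using two by blast
  define ext where "ext z = (\<lambda>g\<in>carrier G. if g \<in> \<phi> ` K then z g else a)" for z :: "'g \<Rightarrow> 'a"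
  have extA: "ext z \<in> carrier G \<rightarrow>\<^sub>E A" if "z \<in> \<phi> ` K \<rightarrow>\<^sub>E A" for z
    using that a by (auto simp: ext_def simp del: image_iff)
  have key: "CA (ext z) h = (if \<phi> h \<in> \<phi> ` K then TK z (SOME k. k \<in> K \<and> \<phi> h = \<phi> k) else \<mu> (\<lambda>m\<in>M. a))"
    if h: "h \<in> carrier H" for z h
  proof (cases "\<phi> h \<in> \<phi> ` K")
    case True
    then obtain k0 where "k0 \<in> K" "\<phi> h = \<phi> k0" by auto
    hence "\<exists>k. k \<in> K \<and> \<phi> h = \<phi> k" by blast
    from someI_ex[OF this] obtain k where k: "k \<in> K" "\<phi> h = \<phi> k" and kdef: "k = (SOME k. k \<in> K \<and> \<phi> h = \<phi> k)" by blast
    have "(\<lambda>m\<in>M. ext z (\<phi> h \<otimes>\<^bsub>G\<^esub> m)) = (\<lambda>m\<in>M. z (\<phi> k \<otimes>\<^bsub>G\<^esub> m))"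
    proof (rule restrict_ext)
      fix m assume m: "m \<in> M"
      have "\<phi> k \<otimes>\<^bsub>G\<^esub> m \<in> \<phi> ` K" using phiKmult k m by auto
      thus "ext z (\<phi> h \<otimes>\<^bsub>G\<^esub> m) = z (\<phi> k \<otimes>\<^bsub>G\<^esub> m)" using phiK k by (auto simp: ext_def)
    qed
    thus ?thesis using True CA_eval[OF h] TK_eval[OF k(1)] kdef by simp
  next
    case False
    have "(\<lambda>m\<in>M. ext z (\<phi> h \<otimes>\<^bsub>G\<^esub> m)) = (\<lambda>m\<in>M. a)"
    proof (rule restrict_ext)
      fix m assume m: "m \<in> M"
      then obtain k where k: "k \<in> K" "m = \<phi> k" using Mform by blast
      have kH: "k \<in> carrier H" using k Ksub by auto
      have eqm: "\<phi> h \<otimes>\<^bsub>G\<^esub> m = \<phi> (h \<otimes>\<^bsub>H\<^esub> k)" using k h kH phim[of h k] by auto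
      have "\<phi> (h \<otimes>\<^bsub>H\<^esub> k) \<notin> \<phi> ` K"
      proof
        assume "\<phi> (h \<otimes>\<^bsub>H\<^esub> k) \<in> \<phi> ` K"
        then obtain k1 where k1: "k1 \<in> K" "\<phi> (h \<otimes>\<^bsub>H\<^esub> k) = \<phi> k1" by auto
        have k1H: "k1 \<in> carrier H" using k1 Ksub by auto
        have "h = (h \<otimes>\<^bsub>H\<^esub> k) \<otimes>\<^bsub>H\<^esub> inv\<^bsub>H\<^esub> k"
          using h kH by (simp add: Hassoc Hrinv Hinvc Hrone)
        hence "\<phi> h = \<phi> k1 \<otimes>\<^bsub>G\<^esub> \<phi> (inv\<^bsub>H\<^esub> k)"
          using k1(2) phim[of "h \<otimes>\<^bsub>H\<^esub> k" "inv\<^bsub>H\<^esub> k"] Hmc[OF h kH] Hinvc[OF kH] by simp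
        also have "\<dots> = \<phi> (k1 \<otimes>\<^bsub>H\<^esub> inv\<^bsub>H\<^esub> k)" using phim[OF k1H Hinvc[OF kH]] by simp
        finally have "\<phi> h \<in> \<phi> ` K" using Kmult Kinv k k1 by blast
        thus False using False by simp
      qed
      moreover have "\<phi> (h \<otimes>\<^bsub>H\<^esub> k) \<in> carrier G" using phic Hmc h kH by blast
      ultimately show "ext z (\<phi> h \<otimes>\<^bsub>G\<^esub> m) = a" using eqm by (simp add: ext_def)
    qed
    thus ?thesis using False CA_eval[OF h] by simp
  qed
  have "CA (ext z1) = CA (ext z2)"
  proof
    fix h show "CA (ext z1) h = CA (ext z2) h"
      by (cases "h \<in> carrier H") (simp_all add: key eq CA_out)
  qed
  hence e: "ext z1 = ext z2" by (rule inj_onD[OF inj _ extA[OF z1] extA[OF z2]])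
  show "z1 = z2"
  proof
    fix g show "z1 g = z2 g"
    proof (cases "g \<in> \<phi> ` K")
      case True
      have "ext z1 g = ext z2 g" using e by simp
      moreover have "g \<in> carrier G" using True phiK by auto
      ultimately show ?thesis using True unfolding ext_def by simp
    next
      case False
      then show ?thesis using PiE_arb[OF z1 False] PiE_arb[OF z2 False] by simp
    qed
  qed
qed

lemma inj_back: assumes inj: "inj_on TK (\<phi> ` K \<rightarrow>\<^sub>E A)" and s: "\<phi> ` carrier H = carrier G"
  shows "inj_on CA (carrier G \<rightarrow>\<^sub>E A)"
proof (rule inj_onI)
  fix x y assume x: "x \<in> carrier G \<rightarrow>\<^sub>E A" and y: "y \<in> carrier G \<rightarrow>\<^sub>E A" and eq: "CA x = CA y"
  show "x = y"
  proof
    fix g show "x g = y g"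
    proof (cases "g \<in> carrier G")
      case True
      then obtain h where h: "h \<in> carrier H" "g = \<phi> h" using s by blast
      have "TK (sub x h) = TK (sub y h)"
      proof
        fix k show "TK (sub x h) k = TK (sub y h) k"
          by (cases "k \<in> K") (simp_all add: sub_TK h eq TK_out)
      qed
      hence "sub x h = sub y h" by (rule inj_onD[OF inj _ sub_funcset[OF x h(1)] sub_funcset[OF y h(1)]])
      hence "sub x h (\<phi> \<one>\<^bsub>H\<^esub>) = sub y h (\<phi> \<one>\<^bsub>H\<^esub>)" by simp
      moreover have o: "\<phi> \<one>\<^bsub>H\<^esub> = \<one>\<^bsub>G\<^esub>" by simp
      moreover have "\<phi> \<one>\<^bsub>H\<^esub> \<in> \<phi> ` K" using Kone by (rule imageI)
      ultimately have "x (\<phi> h \<otimes>\<^bsub>G\<^esub> \<one>\<^bsub>G\<^esub>) = y (\<phi> h \<otimes>\<^bsub>G\<^esub> \<one>\<^bsub>G\<^esub>)"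
        unfolding sub_def by (simp del: gh.hom_one)
      thus ?thesis using h True phic Grone by simp
    next
      case False
      then show ?thesis using PiE_arb[OF x False] PiE_arb[OF y False] by simp
    qed
  qed
qed


lemma bij_inj_phi: assumes su: "carrier H \<rightarrow>\<^sub>E A \<subseteq> CA ` (carrier G \<rightarrow>\<^sub>E A)"
  shows "inj_on \<phi> (carrier H)"
proof (rule inj_onI, rule ccontr)
  fix h1 h2 assume h1: "h1 \<in> carrier H" and h2: "h2 \<in> carrier H" and e: "\<phi> h1 = \<phi> h2" and ne: "h1 \<noteq> h2"
  obtain a b where ab: "a \<in> A" "b \<in> A" "a \<noteq> b" using two by blast
  define y where "y = (\<lambda>h\<in>carrier H. if h = h1 then a else b)"
  have "y \<in> carrier H \<rightarrow>\<^sub>E A" using ab by (auto simp: y_def)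
  then obtain x where "CA x = y" using su by blast
  hence "y h1 = y h2" using CA_eval[OF h1] CA_eval[OF h2] e by metis
  thus False using ne ab h1 h2 by (simp add: y_def)
qed

lemma bij_TK_surj: assumes su: "carrier H \<rightarrow>\<^sub>E A \<subseteq> CA ` (carrier G \<rightarrow>\<^sub>E A)"
  shows "K \<rightarrow>\<^sub>E A \<subseteq> TK ` (\<phi> ` K \<rightarrow>\<^sub>E A)"
proof
  fix y assume y: "y \<in> K \<rightarrow>\<^sub>E A"
  obtain a where a: "a \<in> A" using two by blast
  define Y where "Y = (\<lambda>h\<in>carrier H. if h \<in> K then y h else a)"
  have "Y \<in> carrier H \<rightarrow>\<^sub>E A" using a y by (auto simp: Y_def)
  then obtain x where x: "x \<in> carrier G \<rightarrow>\<^sub>E A" "CA x = Y" using su by blast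
  have o: "\<one>\<^bsub>H\<^esub> \<in> carrier H" using Ksub Kone by blast
  have "TK (sub x \<one>\<^bsub>H\<^esub>) = y"
  proof
    fix k show "TK (sub x \<one>\<^bsub>H\<^esub>) k = y k"
    proof (cases "k \<in> K")
      case True
      hence kH: "k \<in> carrier H" using Ksub by blast
      have "TK (sub x \<one>\<^bsub>H\<^esub>) k = CA x (\<one>\<^bsub>H\<^esub> \<otimes>\<^bsub>H\<^esub> k)" by (rule sub_TK[OF o True])
      also have "\<dots> = Y k" using x(2) Hlone[OF kH] by simp
      finally show ?thesis using True kH by (simp add: Y_def)
    next
      case False thus ?thesis using PiE_arb[OF y False] TK_out by simp
    qed
  qed
  thus "y \<in> TK ` (\<phi> ` K \<rightarrow>\<^sub>E A)" using sub_funcset[OF x(1) o] by blast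
qed

definition rep :: "'h \<Rightarrow> 'h" where
  "rep h = (SOME r. r \<in> carrier H \<and> (\<exists>k\<in>K. r = h \<otimes>\<^bsub>H\<^esub> k))"

lemma rep_prop: assumes h: "h \<in> carrier H" shows "rep h \<in> carrier H \<and> (\<exists>k\<in>K. rep h = h \<otimes>\<^bsub>H\<^esub> k)"
proof -
  have "h \<in> carrier H \<and> (\<exists>k\<in>K. h = h \<otimes>\<^bsub>H\<^esub> k)" using h Kone Hrone[OF h] by metis
  thus ?thesis unfolding rep_def by (rule someI)
qed

lemma rep_mult: assumes h: "h \<in> carrier H" and k0: "k0 \<in> K" shows "rep (h \<otimes>\<^bsub>H\<^esub> k0) = rep h"
proof -
  have k0H: "k0 \<in> carrier H" using k0 Ksub by blast
  have "(\<exists>k\<in>K. r = (h \<otimes>\<^bsub>H\<^esub> k0) \<otimes>\<^bsub>H\<^esub> k) \<longleftrightarrow> (\<exists>k\<in>K. r = h \<otimes>\<^bsub>H\<^esub> k)" for r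
  proof
    assume "\<exists>k\<in>K. r = (h \<otimes>\<^bsub>H\<^esub> k0) \<otimes>\<^bsub>H\<^esub> k"
    then obtain k where k: "k \<in> K" "r = (h \<otimes>\<^bsub>H\<^esub> k0) \<otimes>\<^bsub>H\<^esub> k" by blast
    have "r = h \<otimes>\<^bsub>H\<^esub> (k0 \<otimes>\<^bsub>H\<^esub> k)" using k h k0H Ksub Hassoc by blast
    thus "\<exists>k\<in>K. r = h \<otimes>\<^bsub>H\<^esub> k" using Kmult[OF k0 k(1)] by blast
  next
    assume "\<exists>k\<in>K. r = h \<otimes>\<^bsub>H\<^esub> k"
    then obtain k where k: "k \<in> K" "r = h \<otimes>\<^bsub>H\<^esub> k" by blast
    have kH: "k \<in> carrier H" using k Ksub by blast
    have ik: "inv\<^bsub>H\<^esub> k0 \<in> carrier H" using Hinvc[OF k0H] .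
    have "(h \<otimes>\<^bsub>H\<^esub> k0) \<otimes>\<^bsub>H\<^esub> (inv\<^bsub>H\<^esub> k0 \<otimes>\<^bsub>H\<^esub> k) = h \<otimes>\<^bsub>H\<^esub> (k0 \<otimes>\<^bsub>H\<^esub> (inv\<^bsub>H\<^esub> k0 \<otimes>\<^bsub>H\<^esub> k))"
      using Hassoc h k0H ik kH Hmc by simp
    also have "\<dots> = h \<otimes>\<^bsub>H\<^esub> ((k0 \<otimes>\<^bsub>H\<^esub> inv\<^bsub>H\<^esub> k0) \<otimes>\<^bsub>H\<^esub> k)"
      using Hassoc[OF k0H ik kH] by simp
    also have "\<dots> = h \<otimes>\<^bsub>H\<^esub> k" using Hrinv[OF k0H] Hlone[OF kH] by simp
    finally have "r = (h \<otimes>\<^bsub>H\<^esub> k0) \<otimes>\<^bsub>H\<^esub> (inv\<^bsub>H\<^esub> k0 \<otimes>\<^bsub>H\<^esub> k)" using k by simp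
    thus "\<exists>k\<in>K. r = (h \<otimes>\<^bsub>H\<^esub> k0) \<otimes>\<^bsub>H\<^esub> k" using Kmult[OF Kinv[OF k0] k(1)] by blast
  qed
  thus ?thesis unfolding rep_def by simp
qed

definition kk :: "'h \<Rightarrow> 'h" where "kk h = inv\<^bsub>H\<^esub> (rep h) \<otimes>\<^bsub>H\<^esub> h"

lemma kk_prop: assumes h: "h \<in> carrier H" shows "kk h \<in> K" "rep h \<otimes>\<^bsub>H\<^esub> kk h = h"
proof -
  obtain k where k: "k \<in> K" "rep h = h \<otimes>\<^bsub>H\<^esub> k" and r: "rep h \<in> carrier H" using rep_prop[OF h] by blast
  have kH: "k \<in> carrier H" using k Ksub by blast
  have ir: "inv\<^bsub>H\<^esub> rep h \<in> carrier H" using Hinvc[OF r] .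
  have "rep h \<otimes>\<^bsub>H\<^esub> inv\<^bsub>H\<^esub> k = h \<otimes>\<^bsub>H\<^esub> (k \<otimes>\<^bsub>H\<^esub> inv\<^bsub>H\<^esub> k)"
    using k(2) Hassoc h kH Hinvc by simp
  also have "\<dots> = h" using Hrinv[OF kH] Hrone[OF h] by simp
  finally have hh: "h = rep h \<otimes>\<^bsub>H\<^esub> inv\<^bsub>H\<^esub> k" by simp
  have "kk h = (inv\<^bsub>H\<^esub> rep h \<otimes>\<^bsub>H\<^esub> rep h) \<otimes>\<^bsub>H\<^esub> inv\<^bsub>H\<^esub> k"
    unfolding kk_def using Hassoc ir r Hinvc[OF kH] hh by metis
  also have "\<dots> = inv\<^bsub>H\<^esub> k" using Hlinv[OF r] Hlone[OF Hinvc[OF kH]] by simp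
  finally show "kk h \<in> K" using Kinv[OF k(1)] by simp
  have "rep h \<otimes>\<^bsub>H\<^esub> kk h = (rep h \<otimes>\<^bsub>H\<^esub> inv\<^bsub>H\<^esub> rep h) \<otimes>\<^bsub>H\<^esub> h"
    unfolding kk_def using Hassoc[OF r ir h] by simp
  also have "\<dots> = h" using Hrinv[OF r] Hlone[OF h] by simp
  finally show "rep h \<otimes>\<^bsub>H\<^esub> kk h = h" .
qed

lemma kk_mult: assumes h: "h \<in> carrier H" and m: "m \<in> K" shows "kk (h \<otimes>\<^bsub>H\<^esub> m) = kk h \<otimes>\<^bsub>H\<^esub> m"
proof -
  have mH: "m \<in> carrier H" using m Ksub by blast
  have r: "rep h \<in> carrier H" using rep_prop[OF h] by blast
  show ?thesis unfolding kk_def rep_mult[OF h m] using Hassoc Hinvc[OF r] h mH by simp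
qed

lemma bij_back: assumes inj: "inj_on \<phi> (carrier H)" and s: "\<phi> ` carrier H = carrier G"
  and bT: "bij_betw TK (\<phi> ` K \<rightarrow>\<^sub>E A) (K \<rightarrow>\<^sub>E A)"
  shows "carrier H \<rightarrow>\<^sub>E A \<subseteq> CA ` (carrier G \<rightarrow>\<^sub>E A)"
proof
  fix y assume y: "y \<in> carrier H \<rightarrow>\<^sub>E A"
  define \<psi> where "\<psi> = the_inv_into (carrier H) \<phi>"
  define zz where "zz r = the_inv_into (\<phi> ` K \<rightarrow>\<^sub>E A) TK (\<lambda>k\<in>K. y (r \<otimes>\<^bsub>H\<^esub> k))" for r
  define x where "x = (\<lambda>g\<in>carrier G. zz (rep (\<psi> g)) (\<phi> (kk (\<psi> g))))"
  have psi: "\<psi> (\<phi> h) = h" if "h \<in> carrier H" for h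
    unfolding \<psi>_def using the_inv_into_f_f[OF inj that] .
  have yr: "(\<lambda>k\<in>K. y (r \<otimes>\<^bsub>H\<^esub> k)) \<in> K \<rightarrow>\<^sub>E A" if r: "r \<in> carrier H" for r
  proof -
    have "\<forall>k\<in>K. y (r \<otimes>\<^bsub>H\<^esub> k) \<in> A"
    proof
      fix k assume "k \<in> K" hence "r \<otimes>\<^bsub>H\<^esub> k \<in> carrier H" using Hmc r Ksub by blast
      thus "y (r \<otimes>\<^bsub>H\<^esub> k) \<in> A" by (rule PiE_mem[OF y])
    qed
    thus ?thesis by (simp only: restrict_PiE_iff)
  qed
  have zzA: "zz r \<in> \<phi> ` K \<rightarrow>\<^sub>E A" if r: "r \<in> carrier H" for r
    unfolding zz_def using bij_betwE[OF bij_betw_the_inv_into[OF bT]] yr[OF r] by blast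
  have zzT: "TK (zz r) = (\<lambda>k\<in>K. y (r \<otimes>\<^bsub>H\<^esub> k))" if r: "r \<in> carrier H" for r
    unfolding zz_def using f_the_inv_into_f_bij_betw[OF bT yr[OF r]] .
  have xphi: "x (\<phi> h) = zz (rep h) (\<phi> (kk h))" if h: "h \<in> carrier H" for h
    unfolding x_def using phic[OF h] psi[OF h] by simp
  have xA: "x \<in> carrier G \<rightarrow>\<^sub>E A"
  proof (rule PiE_I)
    fix g assume "g \<in> carrier G"
    then obtain h where h: "h \<in> carrier H" "g = \<phi> h" using s by blast
    have r: "rep h \<in> carrier H" using rep_prop[OF h(1)] by blast
    have "\<phi> (kk h) \<in> \<phi> ` K" using kk_prop(1)[OF h(1)] by blast
    thus "x g \<in> A" using xphi[OF h(1)] h(2) PiE_mem[OF zzA[OF r]] by simp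
  next
    fix g assume "g \<notin> carrier G" thus "x g = undefined" by (simp add: x_def)
  qed
  have "CA x = y"
  proof
    fix h show "CA x h = y h"
    proof (cases "h \<in> carrier H")
      case False thus ?thesis using PiE_arb[OF y False] CA_out by simp
    next
      case True
      define r where "r = rep h"
      have r: "r \<in> carrier H" using rep_prop[OF True] r_def by blast
      have kkK: "kk h \<in> K" using kk_prop(1)[OF True] .
      have kkH: "kk h \<in> carrier H" using kkK Ksub by blast
      have "(\<lambda>m\<in>M. x (\<phi> h \<otimes>\<^bsub>G\<^esub> m)) = (\<lambda>m\<in>M. zz r (\<phi> (kk h) \<otimes>\<^bsub>G\<^esub> m))"
      proof (rule restrict_ext)
        fix m assume "m \<in> M"
        then obtain m' where m': "m' \<in> K" "m = \<phi> m'" using Mform by blast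
        have m'H: "m' \<in> carrier H" using m' Ksub by blast
        have hm: "h \<otimes>\<^bsub>H\<^esub> m' \<in> carrier H" using Hmc True m'H by blast
        have "x (\<phi> h \<otimes>\<^bsub>G\<^esub> m) = x (\<phi> (h \<otimes>\<^bsub>H\<^esub> m'))" using m' phim[OF True m'H] by simp
        also have "\<dots> = zz (rep (h \<otimes>\<^bsub>H\<^esub> m')) (\<phi> (kk (h \<otimes>\<^bsub>H\<^esub> m')))" by (rule xphi[OF hm])
        also have "\<dots> = zz r (\<phi> (kk h \<otimes>\<^bsub>H\<^esub> m'))" using rep_mult[OF True m'(1)] kk_mult[OF True m'(1)] r_def by simp
        also have "\<dots> = zz r (\<phi> (kk h) \<otimes>\<^bsub>G\<^esub> m)" using phim[OF kkH m'H] m' by simp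
        finally show "x (\<phi> h \<otimes>\<^bsub>G\<^esub> m) = zz r (\<phi> (kk h) \<otimes>\<^bsub>G\<^esub> m)" .
      qed
      hence "CA x h = TK (zz r) (kk h)" using CA_eval[OF True] TK_eval[OF kkK] by simp
      also have "\<dots> = y (r \<otimes>\<^bsub>H\<^esub> kk h)" using zzT[OF r] kkK by simp
      also have "\<dots> = y h" using kk_prop(2)[OF True] r_def by simp
      finally show ?thesis .
    qed
  qed
  thus "y \<in> CA ` (carrier G \<rightarrow>\<^sub>E A)" using xA by blast
qed

end

theorem theorem5p7:
  fixes G :: "('g,'c) monoid_scheme" and H :: "('h,'d) monoid_scheme"
    and A :: "'a set" and K :: "'h set" and \<phi> :: "'h \<Rightarrow> 'g"
    and T :: "('g \<Rightarrow> 'a) \<Rightarrow> ('h \<Rightarrow> 'a)"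
    and M :: "'g set" and \<mu> :: "('g \<Rightarrow> 'a) \<Rightarrow> 'a"
  assumes "group G" and "group H" and "subgroup K H" and "\<phi> \<in> hom H G"
    and "finite A" and "card A \<ge> 2"
    and "finite M" and "M \<subseteq> \<phi> ` K"
    and "\<mu> \<in> (M \<rightarrow>\<^sub>E A) \<rightarrow> A"
    and "\<forall>x \<in> carrier G \<rightarrow>\<^sub>E A. T x = phi_CA_map G H \<phi> (carrier G) M \<mu> (carrier H) x"
  shows "(inj_on T (carrier G \<rightarrow>\<^sub>E A) \<longleftrightarrow>
            inj_on (phi_CA_map G H \<phi> (\<phi> ` K) M \<mu> K) (\<phi> ` K \<rightarrow>\<^sub>E A) \<and> \<phi> ` carrier H = carrier G)
       \<and> (bij_betw T (carrier G \<rightarrow>\<^sub>E A) (carrier H \<rightarrow>\<^sub>E A) \<longleftrightarrow>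
            bij_betw (phi_CA_map G H \<phi> (\<phi> ` K) M \<mu> K) (\<phi> ` K \<rightarrow>\<^sub>E A) (K \<rightarrow>\<^sub>E A)
            \<and> bij_betw \<phi> (carrier H) (carrier G))"
proof -
  interpret caS G H A K \<phi> M \<mu>
    by (rule caS.intro) (use assms in auto)
  let ?CA = "phi_CA_map G H \<phi> (carrier G) M \<mu> (carrier H)"
  let ?TK = "phi_CA_map G H \<phi> (\<phi> ` K) M \<mu> K"
  have TCA: "\<And>x. x \<in> carrier G \<rightarrow>\<^sub>E A \<Longrightarrow> T x = ?CA x" using assms(10) by blast
  have ie: "inj_on T (carrier G \<rightarrow>\<^sub>E A) = inj_on ?CA (carrier G \<rightarrow>\<^sub>E A)"
    by (rule inj_on_cong) (rule TCA)
  have be: "bij_betw T (carrier G \<rightarrow>\<^sub>E A) (carrier H \<rightarrow>\<^sub>E A) = bij_betw ?CA (carrier G \<rightarrow>\<^sub>E A) (carrier H \<rightarrow>\<^sub>E A)"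
    by (rule bij_betw_cong) (rule TCA)
  have p1: "inj_on ?CA (carrier G \<rightarrow>\<^sub>E A) \<longleftrightarrow> inj_on ?TK (\<phi> ` K \<rightarrow>\<^sub>E A) \<and> \<phi> ` carrier H = carrier G"
    using inj_surj inj_TK inj_back by blast
  have imCA: "?CA ` (carrier G \<rightarrow>\<^sub>E A) \<subseteq> carrier H \<rightarrow>\<^sub>E A" using CA_funcset by blast
  have imTK: "?TK ` (\<phi> ` K \<rightarrow>\<^sub>E A) \<subseteq> K \<rightarrow>\<^sub>E A" using TK_funcset by blast
  have p2: "bij_betw ?CA (carrier G \<rightarrow>\<^sub>E A) (carrier H \<rightarrow>\<^sub>E A) \<longleftrightarrow>
      bij_betw ?TK (\<phi> ` K \<rightarrow>\<^sub>E A) (K \<rightarrow>\<^sub>E A) \<and> bij_betw \<phi> (carrier H) (carrier G)"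
  proof
    assume b: "bij_betw ?CA (carrier G \<rightarrow>\<^sub>E A) (carrier H \<rightarrow>\<^sub>E A)"
    hence i: "inj_on ?CA (carrier G \<rightarrow>\<^sub>E A)" and su: "carrier H \<rightarrow>\<^sub>E A \<subseteq> ?CA ` (carrier G \<rightarrow>\<^sub>E A)"
      unfolding bij_betw_def by auto
    have "bij_betw ?TK (\<phi> ` K \<rightarrow>\<^sub>E A) (K \<rightarrow>\<^sub>E A)"
      unfolding bij_betw_def using inj_TK[OF i] bij_TK_surj[OF su] imTK by blast
    moreover have "bij_betw \<phi> (carrier H) (carrier G)"
      unfolding bij_betw_def using inj_surj[OF i] bij_inj_phi[OF su] by blast
    ultimately show "bij_betw ?TK (\<phi> ` K \<rightarrow>\<^sub>E A) (K \<rightarrow>\<^sub>E A) \<and> bij_betw \<phi> (carrier H) (carrier G)" ..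
  next
    assume "bij_betw ?TK (\<phi> ` K \<rightarrow>\<^sub>E A) (K \<rightarrow>\<^sub>E A) \<and> bij_betw \<phi> (carrier H) (carrier G)"
    hence bT: "bij_betw ?TK (\<phi> ` K \<rightarrow>\<^sub>E A) (K \<rightarrow>\<^sub>E A)" and bp: "bij_betw \<phi> (carrier H) (carrier G)" by auto
    have ip: "inj_on \<phi> (carrier H)" and sp: "\<phi> ` carrier H = carrier G" using bp unfolding bij_betw_def by auto
    have "inj_on ?CA (carrier G \<rightarrow>\<^sub>E A)" using inj_back[OF _ sp] bT unfolding bij_betw_def by blast
    moreover have "carrier H \<rightarrow>\<^sub>E A \<subseteq> ?CA ` (carrier G \<rightarrow>\<^sub>E A)" by (rule bij_back[OF ip sp bT])
    ultimately show "bij_betw ?CA (carrier G \<rightarrow>\<^sub>E A) (carrier H \<rightarrow>\<^sub>E A)"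
      unfolding bij_betw_def using imCA by blast
  qed
  show ?thesis using ie be p1 p2 by simp
qed

end
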